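(* Assume the network is regular, and let $j^*\in\mathcal E$ be a single child, i.e. there is $m^*\in\mathcal M$ with $m^*\vdash j^*$ such that $m^*\vdash j$ implies $j=j^*$. Then (a) such $m^*$ is unique; (b) $j^*$ influences no reaction: $j^*\not\leadsto j$ for every $j\in\mathcal E$ (including $j=j^*$); (c) the only metabolite influenced by $j^*$ is $m^*$: $j^*\leadsto m^*$ and $j^*\not\leadsto m'$ for every $m'\neq m^*$.
   Context: A reaction network consists of a finite set of metabolites $\mathcal M=\{1,\dots,M\}$ and a finite set of reactions $\mathcal E=\{1,\dots,E\}$. Each reaction $j$ has an input stoichiometric vector $y^j\in\mathbb R_{\ge0}^M$ and an output stoichiometric vector $\bar y^j\in\mathbb R_{\ge0}^M$. Write $m\vdash j$ iff $y^j_m\neq 0$. The stoichiometric matrix $S$ is the real $M\times E$ matrix whose $j$-th column is $S^j=\bar y^j-y^j$; it is assumed to have full rank $M$. The rate matrix $R=(r_{jm})$ is the $E\times M$ matrix whose entries $r_{jm}$ with $m\vdash j$ are independent indeterminates, and $r_{jm}=0$ whenever $m\not\vdash j$. "Nonzero algebraically" means nonzero as a polynomial/rational function in these indeterminates. The network is regular if $\det(SR)\ne0$ algebraically. Let $B=\begin{pmatrix}-\mathrm{id}_{\mathcal E}&R\\ S&0\end{pmatrix}$, a square matrix with rows and columns indexed by the disjoint union $\mathcal E\sqcup\mathcal M$; for a regular network it is invertible over the field of rational functions in the $r_{jm}$. For $\alpha\in\mathcal E\sqcup\mathcal M$ set $z^\alpha=-B^{-1}e_\alpha$, and write $\alpha\leadsto\beta$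 for $\beta\in\mathcal E\sqcup\mathcal M$ if $z^\alpha_\beta$ is nonzero algebraically. *)

theory Defs
  imports "HOL-Analysis.Analysis"
begin

text \<open>Reaction network with metabolites of finite type 'm and reactions of finite
type 'e.  Input stoichiometry y j m, output stoichiometry ybar j m.
A rate assignment r :: 'e \<Rightarrow> 'm \<Rightarrow> real gives real values to the
indeterminates r_jm; entries with m not consumed by j are forced to 0.\<close>

definition vdash :: "('e \<Rightarrow> 'm \<Rightarrow> real) \<Rightarrow> 'm \<Rightarrow> 'e \<Rightarrow> bool" where
  "vdash y m j \<longleftrightarrow> y j m \<noteq> 0"

definition stoich :: "('e::finite \<Rightarrow> 'm::finite \<Rightarrow> real) \<Rightarrow> ('e \<Rightarrow> 'm \<Rightarrow> real) \<Rightarrow> real^'e^'m" where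
  "stoich y ybar = (\<chi> m j. ybar j m - y j m)"

definition ratemat :: "('e::finite \<Rightarrow> 'm::finite \<Rightarrow> real) \<Rightarrow> ('e \<Rightarrow> 'm \<Rightarrow> real) \<Rightarrow> real^'m^'e" where
  "ratemat y r = (\<chi> j m. if vdash y m j then r j m else 0)"

definition Bmat :: "('e::finite \<Rightarrow> 'm::finite \<Rightarrow> real) \<Rightarrow> ('e \<Rightarrow> 'm \<Rightarrow> real) \<Rightarrow> ('e \<Rightarrow> 'm \<Rightarrow> real)
    \<Rightarrow> real^('e + 'm)^('e + 'm)" where
  "Bmat y ybar r = (\<chi> a b. case (a, b) of
       (Inl j, Inl j') \<Rightarrow> (if j = j' then -1 else 0)
     | (Inl j, Inr m) \<Rightarrow> ratemat y r $ j $ m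
     | (Inr m, Inl j) \<Rightarrow> stoich y ybar $ m $ j
     | (Inr m, Inr m') \<Rightarrow> 0)"

text \<open>Regularity: det(SR) is a nonzero polynomial in the r_jm, i.e. nonzero at some
real point.\<close>
definition regular :: "('e::finite \<Rightarrow> 'm::finite \<Rightarrow> real) \<Rightarrow> ('e \<Rightarrow> 'm \<Rightarrow> real) \<Rightarrow> bool" where
  "regular y ybar \<longleftrightarrow> (\<exists>r. det (stoich y ybar ** ratemat y r) \<noteq> 0)"

definition zvec :: "('e::finite \<Rightarrow> 'm::finite \<Rightarrow> real) \<Rightarrow> ('e \<Rightarrow> 'm \<Rightarrow> real) \<Rightarrow> ('e \<Rightarrow> 'm \<Rightarrow> real)
    \<Rightarrow> ('e + 'm) \<Rightarrow> real^('e + 'm)" where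
  "zvec y ybar r \<alpha> = - (matrix_inv (Bmat y ybar r) *v axis \<alpha> 1)"

text \<open>Influence: the rational function z^alpha_beta (denominator det B = +-det(SR))
is nonzero, i.e. nonzero at some real point where det(SR) does not vanish.\<close>
definition influences :: "('e::finite \<Rightarrow> 'm::finite \<Rightarrow> real) \<Rightarrow> ('e \<Rightarrow> 'm \<Rightarrow> real)
    \<Rightarrow> ('e + 'm) \<Rightarrow> ('e + 'm) \<Rightarrow> bool" where
  "influences y ybar \<alpha> \<beta> \<longleftrightarrow>
     (\<exists>r. det (stoich y ybar ** ratemat y r) \<noteq> 0 \<and> zvec y ybar r \<alpha> $ \<beta> \<noteq> 0)"

end

theory Submission
  imports Defs
begin

lemma minv_left:
  fixes A :: "real^'n^'n"
  assumes "invertible A"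
  shows "matrix_inv A ** A = mat 1"
  using someI_ex[OF assms[unfolded invertible_def]] unfolding matrix_inv_def by blast

lemma sum_Plus_UNIV:
  fixes f :: "('a::finite + 'b::finite) \<Rightarrow> real"
  shows "sum f UNIV = (\<Sum>j\<in>UNIV. f (Inl j)) + (\<Sum>m\<in>UNIV. f (Inr m))"
  using sum.Plus[of "UNIV::'a set" "UNIV::'b set" f] by (simp add: o_def)

lemma sum_if_mult:
  fixes f :: "'a::finite \<Rightarrow> real"
  shows "(\<Sum>k\<in>UNIV. (if j = k then a else 0) * f k) = a * f j"
proof -
  have "(\<Sum>k\<in>UNIV. (if j = k then a else 0) * f k) = (\<Sum>k\<in>UNIV. if j = k then a * f j else 0)"
    by (rule sum.cong) auto
  thus ?thesis by simp
qed

lemma sum_mult_if: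
  fixes f :: "'a::finite \<Rightarrow> real"
  shows "(\<Sum>k\<in>UNIV. f k * (if k = a then c else 0)) = f a * c"
proof -
  have "(\<Sum>k\<in>UNIV. f k * (if k = a then c else 0)) = (\<Sum>k\<in>UNIV. if k = a then f a * c else 0)"
    by (rule sum.cong) auto
  thus ?thesis by simp
qed

lemma Bmul_Inl:
  "(Bmat y ybar r *v w) $ Inl j = - w $ Inl j + (\<Sum>m\<in>UNIV. ratemat y r $ j $ m * w $ Inr m)"
  unfolding matrix_vector_mult_def Bmat_def
  by (simp add: sum_Plus_UNIV sum_if_mult)

lemma Bmul_Inr:
  "(Bmat y ybar r *v w) $ Inr m = (\<Sum>j\<in>UNIV. stoich y ybar $ m $ j * w $ Inl j)"
  unfolding matrix_vector_mult_def Bmat_def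
  by (simp add: sum_Plus_UNIV)

lemma B_invertible:
  fixes y ybar r :: "'e::finite \<Rightarrow> 'm::finite \<Rightarrow> real"
  assumes "det (stoich y ybar ** ratemat y r) \<noteq> 0"
  shows "invertible (Bmat y ybar r)"
proof -
  have invSR: "invertible (stoich y ybar ** ratemat y r)" using assms invertible_det_nz by blast
  have "\<forall>w. Bmat y ybar r *v w = 0 \<longrightarrow> w = 0"
  proof (intro allI impI)
    fix w assume w0: "Bmat y ybar r *v w = 0"
    define g :: "real^'e" where "g = (\<chi> j. w $ Inl j)"
    define x :: "real^'m" where "x = (\<chi> m. w $ Inr m)"
    have gx: "g = ratemat y r *v x"
    proof -
      { fix j
        have "(Bmat y ybar r *v w) $ Inl j = 0" using w0 by simp
        hence "g $ j = (ratemat y r *v x) $ j"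
          unfolding Bmul_Inl g_def x_def by (simp add: matrix_vector_mult_def) }
      thus ?thesis by (simp add: vec_eq_iff)
    qed
    have Sg: "stoich y ybar *v g = 0"
    proof -
      { fix m
        have "(Bmat y ybar r *v w) $ Inr m = 0" using w0 by simp
        hence "(stoich y ybar *v g) $ m = 0"
          unfolding Bmul_Inr g_def by (simp add: matrix_vector_mult_def) }
      thus ?thesis by (simp add: vec_eq_iff)
    qed
    have "(stoich y ybar ** ratemat y r) *v x = 0"
      using Sg gx by (simp add: matrix_vector_mul_assoc)
    hence "(stoich y ybar ** ratemat y r) *v x = (stoich y ybar ** ratemat y r) *v 0" by simp
    with inj_matrix_vector_mult[OF invSR] have x0: "x = 0" by (rule injD)
    hence g0: "g = 0" using gx by simp
    show "w = 0"
    proof (subst vec_eq_iff, intro allI)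
      fix b show "w $ b = 0 $ b"
        using x0 g0 by (cases b) (auto simp: vec_eq_iff x_def g_def)
    qed
  qed
  then obtain C where "C ** Bmat y ybar r = mat 1"
    using matrix_left_invertible_ker[of "Bmat y ybar r"] by blast
  thus ?thesis unfolding invertible_left_inverse by blast
qed

lemma R_col:
  assumes "\<And>j. vdash y m j \<Longrightarrow> j = jstar"
  shows "ratemat y r $ j $ m = (if j = jstar then ratemat y r $ jstar $ m else 0)"
proof (cases "j = jstar")
  case False
  then have "\<not> vdash y m j" using assms by blast
  with False show ?thesis by (simp add: ratemat_def)
qed simp

lemma R_mul_axis:
  assumes "\<And>j. vdash y m j \<Longrightarrow> j = jstar"
  shows "ratemat y r *v axis m c = axis jstar (c * ratemat y r $ jstar $ m)"
proof -
  { fix j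
    have "(ratemat y r *v axis m c) $ j = ratemat y r $ j $ m * c"
      by (simp add: matrix_vector_mult_def axis_def if_distrib cong: if_cong)
    also have "\<dots> = axis jstar (c * ratemat y r $ jstar $ m) $ j"
    proof -
      have e: "ratemat y r $ j $ m = (if j = jstar then ratemat y r $ jstar $ m else 0)"
        by (rule R_col[OF assms])
      show ?thesis unfolding e by (cases "j = jstar") (simp_all add: axis_def)
    qed
    finally have "(ratemat y r *v axis m c) $ j = axis jstar (c * ratemat y r $ jstar $ m) $ j" . }
  thus ?thesis by (subst vec_eq_iff) blast
qed

lemma SR_inj:
  assumes "det (stoich y ybar ** ratemat y r) \<noteq> 0"
    and "ratemat y r *v x = 0"
  shows "x = 0"
proof -
  have "invertible (stoich y ybar ** ratemat y r)" using assms invertible_det_nz by blast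
  hence inj: "inj ((*v) (stoich y ybar ** ratemat y r))" by (rule inj_matrix_vector_mult)
  have "(stoich y ybar ** ratemat y r) *v x = (stoich y ybar ** ratemat y r) *v 0"
    using assms(2) by (simp add: matrix_vector_mul_assoc[symmetric])
  with inj show ?thesis by (rule injD)
qed

lemma rstar_nz:
  assumes "det (stoich y ybar ** ratemat y r) \<noteq> 0"
    and "\<And>j. vdash y m j \<Longrightarrow> j = jstar"
  shows "ratemat y r $ jstar $ m \<noteq> 0"
proof
  assume "ratemat y r $ jstar $ m = 0"
  hence "ratemat y r *v axis m 1 = 0" using R_mul_axis[of y m jstar r, OF assms(2)] by simp
  hence "axis m (1::real) = 0" using SR_inj[OF assms(1)] by blast
  thus False by (simp add: axis_eq_0_iff)
qed

lemma zvec_formula: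
  fixes y ybar r :: "'e::finite \<Rightarrow> 'm::finite \<Rightarrow> real"
  assumes det: "det (stoich y ybar ** ratemat y r) \<noteq> 0"
    and col: "\<And>j. vdash y mstar j \<Longrightarrow> j = jstar"
  shows "zvec y ybar r (Inl jstar) =
     (\<chi> b. case b of Inl j \<Rightarrow> 0 | Inr m \<Rightarrow> if m = mstar then - 1 / ratemat y r $ jstar $ mstar else 0)"
    (is "_ = ?zc")
proof -
  let ?B = "Bmat y ybar r"
  let ?c = "ratemat y r $ jstar $ mstar"
  have cnz: "?c \<noteq> 0" using rstar_nz[OF det col] .
  have Bz: "?B *v ?zc = - axis (Inl jstar) 1"
  proof (subst vec_eq_iff, intro allI)
    fix b show "(?B *v ?zc) $ b = (- axis (Inl jstar) 1) $ b"
    proof (cases b)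
      case (Inl j)
      have "(\<Sum>m\<in>UNIV. ratemat y r $ j $ m * (if m = mstar then - 1 / ?c else 0))
            = ratemat y r $ j $ mstar * (- 1 / ?c)"
        by (rule sum_mult_if)
      also have "\<dots> = (if j = jstar then -1 else 0)"
      proof -
        have e: "ratemat y r $ j $ mstar = (if j = jstar then ?c else 0)" by (rule R_col[OF col])
        show ?thesis unfolding e using cnz by (cases "j = jstar") simp_all
      qed
      finally show ?thesis using Inl
        by (simp add: Bmul_Inl axis_def)
    next
      case (Inr m)
      then show ?thesis by (simp add: Bmul_Inr axis_def)
    qed
  qed
  have inv: "invertible ?B" using B_invertible[OF det] .
  have "zvec y ybar r (Inl jstar) = - (matrix_inv ?B *v (?B *v (- ?zc)))"
  proof -
    have "?B *v (0 - ?zc) = ?B *v 0 - ?B *v ?zc" by (rule matrix_vector_mult_diff_distrib)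
    hence "?B *v (- ?zc) = axis (Inl jstar) 1" using Bz by simp
    thus ?thesis unfolding zvec_def by simp
  qed
  also have "\<dots> = ?zc"
    by (simp add: matrix_vector_mul_assoc minv_left[OF inv])
  finally show ?thesis .
qed

theorem mainTheorem5:
  fixes y ybar :: "'e::finite \<Rightarrow> 'm::finite \<Rightarrow> real"
    and jstar :: 'e and mstar :: 'm
  assumes "\<And>j m. y j m \<ge> 0" and "\<And>j m. ybar j m \<ge> 0"
    and "rank (stoich y ybar) = CARD('m)"
    and "regular y ybar"
    and "vdash y mstar jstar"
    and "\<And>j. vdash y mstar j \<Longrightarrow> j = jstar"
  shows "(\<forall>m. vdash y m jstar \<and> (\<forall>j. vdash y m j \<longrightarrow> j = jstar) \<longrightarrow> m = mstar)
       \<and> (\<forall>j. \<not> influences y ybar (Inl jstar) (Inl j))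
       \<and> influences y ybar (Inl jstar) (Inr mstar)
       \<and> (\<forall>m'. m' \<noteq> mstar \<longrightarrow> \<not> influences y ybar (Inl jstar) (Inr m'))"
proof -
  obtain r0 where r0: "det (stoich y ybar ** ratemat y r0) \<noteq> 0"
    using assms(4) unfolding regular_def by blast
  have A: "m = mstar" if hm: "vdash y m jstar" "\<forall>j. vdash y m j \<longrightarrow> j = jstar" for m
  proof (rule ccontr)
    assume ne: "m \<noteq> mstar"
    let ?a = "ratemat y r0 $ jstar $ m"
    let ?b = "ratemat y r0 $ jstar $ mstar"
    have bnz: "?b \<noteq> 0" using rstar_nz[OF r0 assms(6)] .
    have e1: "ratemat y r0 *v axis mstar ?a = axis jstar (?a * ?b)"
      by (rule R_mul_axis[OF assms(6)])
    have e2: "ratemat y r0 *v axis m (- ?b) = axis jstar (- ?b * ?a)"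
      using R_mul_axis[of y m jstar r0 "- ?b"] hm by blast
    have "ratemat y r0 *v (axis mstar ?a + axis m (- ?b)) = axis jstar (?a * ?b) + axis jstar (- ?b * ?a)"
      by (simp only: matrix_vector_right_distrib e1 e2)
    also have "\<dots> = 0" by (simp add: vec_eq_iff axis_def)
    finally have "ratemat y r0 *v (axis mstar ?a + axis m (- ?b)) = 0" .
    hence "axis mstar ?a + axis m (- ?b) = 0" using SR_inj[OF r0] by blast
    hence "(axis mstar ?a + axis m (- ?b)) $ m = 0" by simp
    thus False using ne bnz by (simp add: axis_def)
  qed
  have Z: "zvec y ybar r (Inl jstar) $ b =
     (case b of Inl j \<Rightarrow> 0 | Inr m \<Rightarrow> if m = mstar then - 1 / ratemat y r $ jstar $ mstar else 0)"
    if "det (stoich y ybar ** ratemat y r) \<noteq> 0" for r b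
    using zvec_formula[OF that assms(6)] by simp
  have B: "\<not> influences y ybar (Inl jstar) (Inl j)" for j
  proof -
    have "zvec y ybar r (Inl jstar) $ Inl j = 0" if "det (stoich y ybar ** ratemat y r) \<noteq> 0" for r
      using Z[OF that, of "Inl j"] by simp
    thus ?thesis unfolding influences_def by blast
  qed
  have C: "influences y ybar (Inl jstar) (Inr mstar)"
    unfolding influences_def using Z[OF r0] r0 rstar_nz[OF r0 assms(6)] by auto
  have D: "\<not> influences y ybar (Inl jstar) (Inr m')" if ne: "m' \<noteq> mstar" for m'
  proof -
    have "zvec y ybar r (Inl jstar) $ Inr m' = 0" if "det (stoich y ybar ** ratemat y r) \<noteq> 0" for r
      using Z[OF that, of "Inr m'"] ne by simp
    thus ?thesis unfolding influences_def by blast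
  qed
  show ?thesis using A B C D by blast
qed

end
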